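(* Let $\varphi$ be a finite conjunction of literals of the two forms $x\in y$ and $x = y\setminus z$ (with $x,y,z$ set variables), with finite set of variables $\mathrm{Vars}(\varphi)$. Let $M$ be a set assignment over $\mathrm{Vars}(\varphi)$ satisfying $\varphi$; let $\bar x,\bar y\in\mathrm{Vars}(\varphi)$, let $\overline{M}$ be a set assignment over $\mathrm{Vars}(\varphi)$ satisfying $\varphi$ with $\overline{M}\bar x\neq \overline{M}\bar y$, and let $\mathfrak{t}$ be a set belonging to exactly one of $\overline{M}\bar x$, $\overline{M}\bar y$. Fix a set $\mathfrak{s}$ with $\mathrm{rk}(\mathfrak{s})>\mathrm{rk}(M)$. Define $\mathsf{V}_0=\{u\in\mathrm{Vars}(\varphi)\mid \mathfrak{t}\in\overline{M}u\}$; $\mathsf{V}_n=\{u\in\mathrm{Vars}(\varphi)\mid Mu\cap\{Mw\mid w\in\mathsf{V}_{n-1}\}\neq\emptyset\}$ for $n\ge1$; $M_0v=Mv\cup\{\mathfrak{s}\}$ if $v\in\mathsf{V}_0$ and $M_0v=Mv$ otherwise; for $n\ge1$, $M_nv=M_{n-1}v\cup\{M_{n-1}u\mid u\in\mathsf{V}_{n-1},\ Mu\in Mv\}$ if $v\in\mathsf{V}_n$ and $M_nv=M_{n-1}v$ otherwise. Then for all $x\in\mathrm{Vars}(\varphi)$, $n\in\mathbb{N}$ and every set $\mathfrak{q}\in M_nx$, if $\mathrm{rk}(\mathfrak{q})<\mathrm{rk}(\mathfrak{s})$ then $\mathfrak{q}\in Mx$.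
   Context: A set assignment is a map from a finite set of set variables into the von Neumann universe $\mathcal{V}=\bigcup_\alpha\mathcal{V}_\alpha$, $\mathcal{V}_\alpha=\bigcup_{\beta<\alpha}\mathcal{P}(\mathcal{V}_\beta)$; it satisfies $x\in y$ iff $Mx\in My$ and $x=y\setminus z$ iff $Mx=My\setminus Mz$. The rank $\mathrm{rk}(s)$ of a set $s$ is the least ordinal $\alpha$ with $s\subseteq\mathcal{V}_\alpha$, and $\mathrm{rk}(M)=\max\{\mathrm{rk}(Mx)\mid x\in\mathrm{dom}(M)\}$. *)

theory Defs
  imports Main
begin

text \<open>A universe of well-founded sets is represented abstractly by a carrier type 'u
  together with the extension map elts (elts x is the set of members of x).
  We require extensionality, well-foundedness of membership, and closure under
  adjoining finitely many elements (all the set formation the lemma needs).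
  The von Neumann universe is such a structure.\<close>

definition vn_universe :: "('u \<Rightarrow> 'u set) \<Rightarrow> bool" where
  "vn_universe elts \<longleftrightarrow>
     inj elts \<and> wf {(x, y). x \<in> elts y} \<and>
     (\<forall>x F. finite F \<longrightarrow> (\<exists>y. elts y = elts x \<union> F))"

definition adjoin :: "('u \<Rightarrow> 'u set) \<Rightarrow> 'u \<Rightarrow> 'u set \<Rightarrow> 'u" where
  "adjoin elts x F = (THE y. elts y = elts x \<union> F)"

text \<open>Rank comparison: rk a \<le> rk b and rk a < rk b, where
  rk a = sup of (rk a' + 1) over members a' of a.\<close>
inductive rank_le and rank_lt for elts :: "'u \<Rightarrow> 'u set" where
  rank_leI: "(\<forall>a'\<in>elts a. rank_lt elts a' b) \<Longrightarrow> rank_le elts a b"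
| rank_ltI: "b' \<in> elts b \<Longrightarrow> rank_le elts a b' \<Longrightarrow> rank_lt elts a b"

datatype 'v lit = Mem 'v 'v | Diff 'v 'v 'v

fun lit_vars :: "'v lit \<Rightarrow> 'v set" where
  "lit_vars (Mem x y) = {x, y}"
| "lit_vars (Diff x y z) = {x, y, z}"

definition Vars :: "'v lit list \<Rightarrow> 'v set" where
  "Vars \<phi> = (\<Union>l\<in>set \<phi>. lit_vars l)"

fun lit_holds :: "('u \<Rightarrow> 'u set) \<Rightarrow> ('v \<Rightarrow> 'u) \<Rightarrow> 'v lit \<Rightarrow> bool" where
  "lit_holds elts M (Mem x y) \<longleftrightarrow> M x \<in> elts (M y)"
| "lit_holds elts M (Diff x y z) \<longleftrightarrow> elts (M x) = elts (M y) - elts (M z)"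

definition satisfies :: "('u \<Rightarrow> 'u set) \<Rightarrow> ('v \<Rightarrow> 'u) \<Rightarrow> 'v lit list \<Rightarrow> bool" where
  "satisfies elts M \<phi> \<longleftrightarrow> (\<forall>l\<in>set \<phi>. lit_holds elts M l)"

primrec Vset :: "('u \<Rightarrow> 'u set) \<Rightarrow> 'v lit list \<Rightarrow> ('v \<Rightarrow> 'u) \<Rightarrow> ('v \<Rightarrow> 'u) \<Rightarrow> 'u
                 \<Rightarrow> nat \<Rightarrow> 'v set" where
  "Vset elts \<phi> M Mb t 0 = {u \<in> Vars \<phi>. t \<in> elts (Mb u)}"
| "Vset elts \<phi> M Mb t (Suc n) =
     {u \<in> Vars \<phi>. elts (M u) \<inter> {M w | w. w \<in> Vset elts \<phi> M Mb t n} \<noteq> {}}"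

primrec Mseq :: "('u \<Rightarrow> 'u set) \<Rightarrow> 'v lit list \<Rightarrow> ('v \<Rightarrow> 'u) \<Rightarrow> ('v \<Rightarrow> 'u) \<Rightarrow> 'u
                 \<Rightarrow> 'u \<Rightarrow> nat \<Rightarrow> 'v \<Rightarrow> 'u" where
  "Mseq elts \<phi> M Mb t s 0 v =
     (if v \<in> Vset elts \<phi> M Mb t 0 then adjoin elts (M v) {s} else M v)"
| "Mseq elts \<phi> M Mb t s (Suc n) v =
     (if v \<in> Vset elts \<phi> M Mb t (Suc n)
      then adjoin elts (Mseq elts \<phi> M Mb t s n v)
             {Mseq elts \<phi> M Mb t s n u | u. u \<in> Vset elts \<phi> M Mb t n \<and> M u \<in> elts (M v)}
      else Mseq elts \<phi> M Mb t s n v)"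

end

theory Submission
  imports Defs
begin

lemma rle_iff: "rank_le elts a b \<longleftrightarrow> (\<forall>a'\<in>elts a. \<exists>b'\<in>elts b. rank_le elts a' b')"
  by (subst rank_le.simps) (auto simp: rank_lt.simps)

lemma rlt_iff: "rank_lt elts a b \<longleftrightarrow> (\<exists>b'\<in>elts b. rank_le elts a b')"
  by (subst rank_lt.simps) auto

lemma rle_refl:
  assumes wf: "wf {(x, y). x \<in> elts y}"
  shows "rank_le elts a a"
  using wf
proof (induction a rule: wf_induct_rule)
  case (less x)
  then show ?case by (subst rle_iff) auto
qed

lemma rle_trans:
  assumes wf: "wf {(x, y). x \<in> elts y}"
  shows "rank_le elts a b \<Longrightarrow> rank_le elts b c \<Longrightarrow> rank_le elts a c"
  using wf
proof (induction a arbitrary: b c rule: wf_induct_rule)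
  case (less a)
  show ?case
    apply (subst rle_iff)
  proof
    fix a' assume a': "a' \<in> elts a"
    from less.prems(1) a' obtain b' where "b' \<in> elts b" "rank_le elts a' b'"
      using rle_iff[THEN iffD1, of elts a b] by blast
    moreover from this less.prems(2) obtain c' where "c' \<in> elts c" "rank_le elts b' c'"
      using rle_iff[THEN iffD1, of elts b c] by blast
    ultimately have "rank_le elts a' c'" using less.IH[of a' b' c'] a' by simp
    then show "\<exists>c'\<in>elts c. rank_le elts a' c'" using \<open>c' \<in> elts c\<close> by blast
  qed
qed

lemma rle_mem:
  assumes wf: "wf {(x, y). x \<in> elts y}"
  shows "b' \<in> elts b \<Longrightarrow> rank_le elts b' b"
  using wf
proof (induction b' arbitrary: b rule: wf_induct_rule)
  case (less b')
  have "\<forall>a'\<in>elts b'. rank_lt elts a' b"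
  proof
    fix a' assume a': "a' \<in> elts b'"
    have "rank_le elts a' b'" using less.IH[of a' b'] a' by simp
    then show "rank_lt elts a' b" using rank_ltI[of b' elts b a'] less.prems by blast
  qed
  then show ?case by (rule rank_leI)
qed

lemma rlt_le:
  assumes wf: "wf {(x, y). x \<in> elts y}"
  shows "rank_lt elts a b \<Longrightarrow> rank_le elts a b"
proof -
  assume "rank_lt elts a b"
  then obtain b' where "b' \<in> elts b" "rank_le elts a b'" unfolding rlt_iff by blast
  then show ?thesis using rle_trans[OF wf \<open>rank_le elts a b'\<close> rle_mem[OF wf]] by simp
qed

lemma rlt_irrefl:
  assumes wf: "wf {(x, y). x \<in> elts y}"
  shows "\<not> rank_lt elts a a"
  using wf
proof (induction a rule: wf_induct_rule)
  case (less a)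
  show ?case
  proof
    assume "rank_lt elts a a"
    then obtain a' where a': "a' \<in> elts a" "rank_le elts a a'" unfolding rlt_iff by blast
    then obtain c where "c \<in> elts a'" "rank_le elts a' c"
      using rle_iff[of elts a a'] by blast
    then have "rank_lt elts a' a'" using rank_ltI[of c elts a' a'] by blast
    with less.IH a' show False by blast
  qed
qed

lemma rlt_asym:
  assumes wf: "wf {(x, y). x \<in> elts y}"
  shows "rank_lt elts a b \<Longrightarrow> rank_lt elts b a \<Longrightarrow> False"
proof -
  assume h1: "rank_lt elts a b" and h2: "rank_lt elts b a"
  from h2 obtain a' where "a' \<in> elts a" "rank_le elts b a'" unfolding rlt_iff by blast
  moreover have "rank_le elts a b" using rlt_le[OF wf h1] .
  ultimately have "rank_le elts a a'" using rle_trans[OF wf \<open>rank_le elts a b\<close> \<open>rank_le elts b a'\<close>] by simp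
  then have "rank_lt elts a a" using rank_ltI[of a' elts a a] \<open>a' \<in> elts a\<close> by blast
  with rlt_irrefl[OF wf] show False by blast
qed

lemma adjoin_elts:
  assumes "vn_universe elts" "finite F"
  shows "elts (adjoin elts x F) = elts x \<union> F"
proof -
  from assms obtain y where y: "elts y = elts x \<union> F" unfolding vn_universe_def by blast
  from assms have inj: "inj elts" unfolding vn_universe_def by blast
  have "(THE y. elts y = elts x \<union> F) = y"
  proof (rule the_equality)
    show "elts y = elts x \<union> F" by (rule y)
  next
    fix y' assume "elts y' = elts x \<union> F"
    then have "elts y' = elts y" using y by simp
    then show "y' = y" using inj by (rule injD[rotated])
  qed
  then show ?thesis using y unfolding adjoin_def by simp
qed

lemma finite_Vars: "finite (Vars \<phi>)"
proof -
  have "finite (lit_vars l)" for l :: "'v lit" by (cases l) auto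
  then show ?thesis unfolding Vars_def by auto
qed

lemma Vset_sub: "Vset elts \<phi> M Mb t n \<subseteq> Vars \<phi>"
  by (cases n) auto

theorem lemma7:
  fixes elts :: "'u \<Rightarrow> 'u set"
    and \<phi> :: "'v lit list"
    and M Mb :: "'v \<Rightarrow> 'u"
    and xb yb :: 'v
    and t s :: 'u
  assumes univ: "vn_universe elts"
    and satM: "satisfies elts M \<phi>"
    and satMb: "satisfies elts Mb \<phi>"
    and xb: "xb \<in> Vars \<phi>" and yb: "yb \<in> Vars \<phi>"
    and neq: "Mb xb \<noteq> Mb yb"
    and t: "(t \<in> elts (Mb xb)) \<noteq> (t \<in> elts (Mb yb))"
    and s: "\<forall>v\<in>Vars \<phi>. rank_lt elts (M v) s"
  shows "\<forall>x\<in>Vars \<phi>. \<forall>n q. q \<in> elts (Mseq elts \<phi> M Mb t s n x) \<longrightarrow>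
           rank_lt elts q s \<longrightarrow> q \<in> elts (M x)"
proof -
  have wf: "wf {(x, y). x \<in> elts y}" using univ unfolding vn_universe_def by blast
  define Ms where "Ms = Mseq elts \<phi> M Mb t s"
  define V where "V = Vset elts \<phi> M Mb t"
  have fin: "finite {Ms n u | u. u \<in> V n \<and> M u \<in> elts (M v)}" for n v
  proof -
    have "{Ms n u | u. u \<in> V n \<and> M u \<in> elts (M v)} \<subseteq> Ms n ` Vars \<phi>"
      using Vset_sub[of elts \<phi> M Mb t n] unfolding V_def by blast
    then show ?thesis using finite_Vars finite_subset by blast
  qed
  have E0: "elts (Ms 0 v) = (if v \<in> V 0 then elts (M v) \<union> {s} else elts (M v))" for v
    unfolding Ms_def V_def using adjoin_elts[OF univ] by (simp del: Vset.simps)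
  have ES: "elts (Ms (Suc n) v) = (if v \<in> V (Suc n) then elts (Ms n v) \<union>
      {Ms n u | u. u \<in> V n \<and> M u \<in> elts (M v)} else elts (Ms n v))" for n v
    using adjoin_elts[OF univ fin[of n v]] unfolding Ms_def V_def by (simp del: Vset.simps)
  have big: "u \<in> V n \<Longrightarrow> rank_lt elts s (Ms n u)" for n u
  proof (induction n arbitrary: u)
    case 0
    then have "elts (Ms 0 u) = elts (M u) \<union> {s}" using E0[of u] by (simp only: if_True)
    then have "s \<in> elts (Ms 0 u)" by (simp only: Un_iff insert_iff simp_thms)
    then show ?case using rank_ltI[of s elts "Ms 0 u" s] rle_refl[OF wf, of s] by blast
  next
    case (Suc n)
    have "elts (M u) \<inter> {M w | w. w \<in> V n} \<noteq> {}"
      using Suc.prems unfolding V_def Vset.simps(2) by blast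
    then obtain w where w: "w \<in> V n" "M w \<in> elts (M u)" by blast
    have "elts (Ms (Suc n) u) = elts (Ms n u) \<union> {Ms n u' | u'. u' \<in> V n \<and> M u' \<in> elts (M u)}"
      using ES[of n u] Suc.prems by (simp only: if_True)
    then have "Ms n w \<in> elts (Ms (Suc n) u)" using w by blast
    moreover have "rank_le elts s (Ms n w)" using rlt_le[OF wf Suc.IH[OF w(1)]] .
    ultimately show ?case using rank_ltI[of "Ms n w" elts "Ms (Suc n) u" s] by blast
  qed
  have main: "q \<in> elts (Ms n x) \<Longrightarrow> rank_lt elts q s \<Longrightarrow> q \<in> elts (M x)" for n x q
  proof (induction n arbitrary: q)
    case 0
    show ?case
    proof (cases "x \<in> V 0")
      case True
      then have "elts (Ms 0 x) = elts (M x) \<union> {s}" using E0[of x] by (simp only: if_True)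
      moreover have "q \<noteq> s" using 0(2) rlt_irrefl[OF wf, of s] by blast
      ultimately show ?thesis using 0(1) by blast
    next
      case False
      then have "elts (Ms 0 x) = elts (M x)" using E0[of x] by (simp only: if_False)
      then show ?thesis using 0(1) by blast
    qed
  next
    case (Suc n)
    show ?case
    proof (cases "q \<in> elts (Ms n x)")
      case True
      then show ?thesis using Suc.IH Suc.prems(2) by blast
    next
      case False
      have "elts (Ms (Suc n) x) \<subseteq> elts (Ms n x) \<union> {Ms n u | u. u \<in> V n \<and> M u \<in> elts (M x)}"
        using ES[of n x] by (cases "x \<in> V (Suc n)") (simp_all only: if_True if_False, blast+)
      then obtain u where u: "u \<in> V n" "q = Ms n u" using Suc.prems(1) False by blast
      have "rank_lt elts s q" using big[OF u(1)] u(2) by simp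
      then show ?thesis using rlt_asym[OF wf _ Suc.prems(2)] by blast
    qed
  qed
  show ?thesis using main unfolding Ms_def by blast
qed

end
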